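(* For every formula $\varphi$ of $\mathcal L^{\bigcirc}_\square$ the following are equivalent: (i) $\varphi$ is derivable in $\mathbf{K4H}$; (ii) $\varphi$ is valid on every finite invertible dynamic $\mathbf{K4}$ frame; (iii) $\varphi$ is valid, with respect to the $d$-semantics, on every invertible dynamic topological system $\langle X,\tau,f\rangle$ whose underlying space is $T_D$.
   Context: Language $\mathcal L^{\bigcirc}_\square$: $\varphi::= p\mid \varphi\wedge\varphi\mid\neg\varphi\mid\square\varphi\mid\bigcirc\varphi$, $p$ ranging over a fixed non-empty set $\mathsf{PV}$. Axioms and rules: Taut; K: $\square(\varphi\to\psi)\to(\square\varphi\to\square\psi)$; 4: $\square\varphi\to\square\square\varphi$; ${\rm Next}_\neg$: $\neg\bigcirc\varphi\leftrightarrow\bigcirc\neg\varphi$; ${\rm Next}_\wedge$: $\bigcirc(\varphi\wedge\psi)\leftrightarrow\bigcirc\varphi\wedge\bigcirc\psi$; H: $\square\bigcirc\varphi\leftrightarrow\bigcirc\square\varphi$; rules modus ponens, ${\rm Nec}_\square$, ${\rm Nec}_\bigcirc$. $\mathbf{K4H}$ is axiomatised by Taut, K, 4, ${\rm Next}_\neg$, ${\rm Next}_\wedge$, H, closed under these rules. An invertible dynamic $\mathbf{K4}$ frame is $\langle W,\sqsubset,f\rangle$ with $W$ non-empty, $\sqsubset$ transitive, and $f\colon W\to W$ a bijection such that $w\sqsubset v$ iff $f(w)\sqsubset f(v)$. Kripke truth: $w\models\square\varphi$ iff $v\models\varphi$ for all $v$ with $w\sqsubset v$; $w\models\bigcirc\varphi$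 iff $f(w)\models\varphi$. A $T_D$ space is one in which every singleton is the intersection of an open and a closed set. An invertible DTS is $\langle X,\tau,f\rangle$ with $f$ a homeomorphism of $X$. $d$-semantics: with $d(A)$ the set of $x$ in the closure of $A\setminus\{x\}$, $\|p\|=\nu(p)$, Boolean clauses set-theoretic, $\|\square\varphi\|=X\setminus d(\|\neg\varphi\|)$, $\|\bigcirc\varphi\|=f^{-1}(\|\varphi\|)$. Validity means truth everywhere under every valuation. *)

theory Defs
  imports "HOL-Analysis.Analysis"
begin

datatype 'p fm =
    Atom 'p
  | And "'p fm" "'p fm"
  | Neg "'p fm"
  | Box "'p fm"
  | Nxt "'p fm"

definition Imp :: "'p fm \<Rightarrow> 'p fm \<Rightarrow> 'p fm" where
  "Imp a b = Neg (And a (Neg b))"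

definition Iff :: "'p fm \<Rightarrow> 'p fm \<Rightarrow> 'p fm" where
  "Iff a b = And (Imp a b) (Imp b a)"

fun peval :: "('p fm \<Rightarrow> bool) \<Rightarrow> 'p fm \<Rightarrow> bool" where
  "peval v (Atom p) = v (Atom p)"
| "peval v (And a b) = (peval v a \<and> peval v b)"
| "peval v (Neg a) = (\<not> peval v a)"
| "peval v (Box a) = v (Box a)"
| "peval v (Nxt a) = v (Nxt a)"

definition taut :: "'p fm \<Rightarrow> bool" where
  "taut \<phi> = (\<forall>v. peval v \<phi>)"

inductive K4H :: "'p fm \<Rightarrow> bool" where
  Taut: "taut \<phi> \<Longrightarrow> K4H \<phi>"
| K: "K4H (Imp (Box (Imp \<phi> \<psi>)) (Imp (Box \<phi>) (Box \<psi>)))"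
| Four: "K4H (Imp (Box \<phi>) (Box (Box \<phi>)))"
| Next_neg: "K4H (Iff (Neg (Nxt \<phi>)) (Nxt (Neg \<phi>)))"
| Next_and: "K4H (Iff (Nxt (And \<phi> \<psi>)) (And (Nxt \<phi>) (Nxt \<psi>)))"
| H: "K4H (Iff (Box (Nxt \<phi>)) (Nxt (Box \<phi>)))"
| MP: "K4H (Imp \<phi> \<psi>) \<Longrightarrow> K4H \<phi> \<Longrightarrow> K4H \<psi>"
| Nec_box: "K4H \<phi> \<Longrightarrow> K4H (Box \<phi>)"
| Nec_next: "K4H \<phi> \<Longrightarrow> K4H (Nxt \<phi>)"

definition inv_dyn_K4_frame :: "'a set \<Rightarrow> ('a \<Rightarrow> 'a \<Rightarrow> bool) \<Rightarrow> ('a \<Rightarrow> 'a) \<Rightarrow> bool" where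
  "inv_dyn_K4_frame W R f \<longleftrightarrow>
     W \<noteq> {} \<and>
     (\<forall>w v. R w v \<longrightarrow> w \<in> W \<and> v \<in> W) \<and>
     (\<forall>u\<in>W. \<forall>v\<in>W. \<forall>w\<in>W. R u v \<longrightarrow> R v w \<longrightarrow> R u w) \<and>
     bij_betw f W W \<and>
     (\<forall>w\<in>W. \<forall>v\<in>W. R w v \<longleftrightarrow> R (f w) (f v))"

fun ksat :: "'a set \<Rightarrow> ('a \<Rightarrow> 'a \<Rightarrow> bool) \<Rightarrow> ('a \<Rightarrow> 'a) \<Rightarrow> ('p \<Rightarrow> 'a set) \<Rightarrow> 'a \<Rightarrow> 'p fm \<Rightarrow> bool" where
  "ksat W R f V w (Atom p) = (w \<in> V p)"
| "ksat W R f V w (And a b) = (ksat W R f V w a \<and> ksat W R f V w b)"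
| "ksat W R f V w (Neg a) = (\<not> ksat W R f V w a)"
| "ksat W R f V w (Box a) = (\<forall>v\<in>W. R w v \<longrightarrow> ksat W R f V v a)"
| "ksat W R f V w (Nxt a) = ksat W R f V (f w) a"

definition kvalid :: "'a set \<Rightarrow> ('a \<Rightarrow> 'a \<Rightarrow> bool) \<Rightarrow> ('a \<Rightarrow> 'a) \<Rightarrow> 'p fm \<Rightarrow> bool" where
  "kvalid W R f \<phi> \<longleftrightarrow> (\<forall>V. \<forall>w\<in>W. ksat W R f V w \<phi>)"

definition T_D_space :: "'a topology \<Rightarrow> bool" where
  "T_D_space T \<longleftrightarrow>
     (\<forall>x\<in>topspace T. \<exists>U C. openin T U \<and> closedin T C \<and> U \<inter> C = {x})"

definition inv_DTS :: "'a topology \<Rightarrow> ('a \<Rightarrow> 'a) \<Rightarrow> bool" where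
  "inv_DTS T f \<longleftrightarrow> homeomorphic_map T T f"

fun dval :: "'a topology \<Rightarrow> ('a \<Rightarrow> 'a) \<Rightarrow> ('p \<Rightarrow> 'a set) \<Rightarrow> 'p fm \<Rightarrow> 'a set" where
  "dval T f V (Atom p) = V p \<inter> topspace T"
| "dval T f V (And a b) = dval T f V a \<inter> dval T f V b"
| "dval T f V (Neg a) = topspace T - dval T f V a"
| "dval T f V (Box a) = topspace T - (T derived_set_of (topspace T - dval T f V a))"
| "dval T f V (Nxt a) = {x \<in> topspace T. f x \<in> dval T f V a}"

definition dvalid :: "'a topology \<Rightarrow> ('a \<Rightarrow> 'a) \<Rightarrow> 'p fm \<Rightarrow> bool" where
  "dvalid T f \<phi> \<longleftrightarrow> (\<forall>V. dval T f V \<phi> = topspace T)"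

end

theory Submission
  imports Defs
begin


lemma peval_Imp[simp]: "peval v (Imp a b) = (peval v a \<longrightarrow> peval v b)"
  by (simp add: Imp_def)
lemma peval_Iff[simp]: "peval v (Iff a b) = (peval v a \<longleftrightarrow> peval v b)"
  by (auto simp add: Iff_def)

lemma prop0: "(\<And>v. peval v c) \<Longrightarrow> K4H c"
  by (rule K4H.Taut) (simp add: taut_def)

lemma prop1: "K4H a \<Longrightarrow> (\<And>v. peval v a \<Longrightarrow> peval v c) \<Longrightarrow> K4H c"
  by (rule K4H.MP[of a], rule prop0) auto

lemma prop2: "K4H a \<Longrightarrow> K4H b \<Longrightarrow> (\<And>v. peval v a \<Longrightarrow> peval v b \<Longrightarrow> peval v c) \<Longrightarrow> K4H c"
  by (rule K4H.MP[of b], rule K4H.MP[of a], rule prop0) auto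

lemma prop3: "K4H a \<Longrightarrow> K4H b \<Longrightarrow> K4H d \<Longrightarrow> (\<And>v. peval v a \<Longrightarrow> peval v b \<Longrightarrow> peval v d \<Longrightarrow> peval v c) \<Longrightarrow> K4H c"
  by (rule K4H.MP[of d], rule K4H.MP[of b], rule K4H.MP[of a], rule prop0) auto

lemma prop4: "K4H a \<Longrightarrow> K4H b \<Longrightarrow> K4H d \<Longrightarrow> K4H e \<Longrightarrow> (\<And>v. peval v a \<Longrightarrow> peval v b \<Longrightarrow> peval v d \<Longrightarrow> peval v e \<Longrightarrow> peval v c) \<Longrightarrow> K4H c"
  by (rule K4H.MP[of e], rule K4H.MP[of d], rule K4H.MP[of b], rule K4H.MP[of a], rule prop0) auto

section \<open>Kripke soundness\<close>
lemma frame_trans: "inv_dyn_K4_frame W R f \<Longrightarrow> u\<in>W \<Longrightarrow> v\<in>W \<Longrightarrow> w\<in>W \<Longrightarrow> R u v \<Longrightarrow> R v w \<Longrightarrow> R u w"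
  unfolding inv_dyn_K4_frame_def by (elim conjE) fast
lemma frame_rel: "inv_dyn_K4_frame W R f \<Longrightarrow> R u v \<Longrightarrow> u \<in> W \<and> v \<in> W"
  unfolding inv_dyn_K4_frame_def by (elim conjE) fast
lemma frame_bij: "inv_dyn_K4_frame W R f \<Longrightarrow> bij_betw f W W"
  unfolding inv_dyn_K4_frame_def by (elim conjE) 
lemma frame_com: "inv_dyn_K4_frame W R f \<Longrightarrow> w\<in>W \<Longrightarrow> v\<in>W \<Longrightarrow> R (f w) (f v) = R w v"
  unfolding inv_dyn_K4_frame_def by (elim conjE) fast

lemma ksat_peval: "ksat W R f V w \<phi> = peval (\<lambda>\<psi>. ksat W R f V w \<psi>) \<phi>"
  by (induction \<phi>) auto

lemma ksat_Imp[simp]: "ksat W R f V w (Imp a b) = (ksat W R f V w a \<longrightarrow> ksat W R f V w b)"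
  by (simp add: Imp_def)
lemma ksat_Iff[simp]: "ksat W R f V w (Iff a b) = (ksat W R f V w a \<longleftrightarrow> ksat W R f V w b)"
  by (auto simp add: Iff_def)

lemma ksound:
  assumes fr: "inv_dyn_K4_frame W R f"
  shows "K4H \<phi> \<Longrightarrow> \<forall>w\<in>W. ksat W R f V w \<phi>"
proof (induction rule: K4H.induct)
  case (Taut \<phi>)
  then show ?case by (subst ksat_peval) (simp add: taut_def)
next
  case (K \<phi> \<psi>)
  then show ?case by simp
next
  case (Four \<phi>)
  then show ?case using frame_trans[OF fr] frame_rel[OF fr] by simp
next
  case (Next_neg \<phi>)
  then show ?case by simp
next
  case (Next_and \<phi> \<psi>)
  then show ?case by simp
next
  case (H \<phi>)
  have bij: "bij_betw f W W" using frame_bij[OF fr] .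
  have com: "\<forall>w\<in>W. \<forall>v\<in>W. R w v \<longleftrightarrow> R (f w) (f v)" using frame_com[OF fr] by simp
  have img: "f ` W = W" using bij by (simp add: bij_betw_def)
  show ?case
  proof
    fix w assume w: "w \<in> W"
    have "(\<forall>v\<in>W. R w v \<longrightarrow> ksat W R f V (f v) \<phi>) \<longleftrightarrow> (\<forall>u\<in>W. R (f w) u \<longrightarrow> ksat W R f V u \<phi>)"
    proof
      assume A: "\<forall>v\<in>W. R w v \<longrightarrow> ksat W R f V (f v) \<phi>"
      show "\<forall>u\<in>W. R (f w) u \<longrightarrow> ksat W R f V u \<phi>"
      proof (intro ballI impI)
        fix u assume u: "u \<in> W" "R (f w) u"
        then obtain v where v: "v \<in> W" "u = f v" using img by auto
        then show "ksat W R f V u \<phi>" using A com w u by auto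
      qed
    next
      assume A: "\<forall>u\<in>W. R (f w) u \<longrightarrow> ksat W R f V u \<phi>"
      show "\<forall>v\<in>W. R w v \<longrightarrow> ksat W R f V (f v) \<phi>"
        using A com w img by auto
    qed
    then show "ksat W R f V w (Iff (Box (Nxt \<phi>)) (Nxt (Box \<phi>)))" by simp
  qed
next
  case (MP \<phi> \<psi>)
  then show ?case by auto
next
  case (Nec_box \<phi>)
  then show ?case by auto
next
  case (Nec_next \<phi>)
  then show ?case using frame_bij[OF fr] unfolding bij_betw_def by auto
qed


section \<open>Topological soundness\<close>

lemma dval_sub: "dval T f V \<phi> \<subseteq> topspace T"
  by (induction \<phi>) auto

lemma dval_peval: "x \<in> topspace T \<Longrightarrow> (x \<in> dval T f V \<phi>) = peval (\<lambda>\<psi>. x \<in> dval T f V \<psi>) \<phi>"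
  by (induction \<phi>) auto

lemma dval_Imp: "x \<in> dval T f V (Imp a b) \<longleftrightarrow> x \<in> topspace T \<and> (x \<in> dval T f V a \<longrightarrow> x \<in> dval T f V b)"
  using dval_sub[of T f V a] by (auto simp add: Imp_def)

lemma dval_Iff: "x \<in> dval T f V (Iff a b) \<longleftrightarrow> x \<in> topspace T \<and> (x \<in> dval T f V a \<longleftrightarrow> x \<in> dval T f V b)"
  unfolding Iff_def dval.simps(2) Int_iff dval_Imp by blast
lemma dval_Box: "x \<in> dval T f V (Box a) \<longleftrightarrow> x \<in> topspace T \<and>
   (\<exists>U. openin T U \<and> x \<in> U \<and> (\<forall>y\<in>U. y \<noteq> x \<longrightarrow> y \<in> dval T f V a))"
proof -
  have "x \<in> dval T f V (Box a) \<longleftrightarrow> x \<in> topspace T \<and> \<not> (\<forall>U. x \<in> U \<and> openin T U \<longrightarrow> (\<exists>y\<noteq>x. y \<in> topspace T - dval T f V a \<and> y \<in> U))"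
    unfolding dval.simps(4) Diff_iff in_derived_set_of by blast
  also have "\<dots> \<longleftrightarrow> x \<in> topspace T \<and>
   (\<exists>U. openin T U \<and> x \<in> U \<and> (\<forall>y\<in>U. y \<noteq> x \<longrightarrow> y \<in> dval T f V a))"
  proof -
    have "\<And>U y. openin T U \<Longrightarrow> y \<in> U \<Longrightarrow> y \<in> topspace T" using openin_subset by blast
    then show ?thesis by blast
  qed
  finally show ?thesis .
qed

lemma tsound:
  assumes hom: "inv_DTS T f" and td: "T_D_space T"
  shows "K4H \<phi> \<Longrightarrow> dval T f V \<phi> = topspace T"
proof (induction rule: K4H.induct)
  case (Taut \<phi>)
  then show ?case using dval_sub[of T f V \<phi>] dval_peval[of _ T f V \<phi>] by (auto simp: taut_def)
next
  case (K \<phi> \<psi>)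
  show ?case
  proof (rule antisym[OF dval_sub], rule subsetI)
    fix x assume x: "x \<in> topspace T"
    show "x \<in> dval T f V (Imp (Box (Imp \<phi> \<psi>)) (Imp (Box \<phi>) (Box \<psi>)))"
    proof (simp only: dval_Imp, intro conjI impI x)
      assume a1: "x \<in> dval T f V (Box (Imp \<phi> \<psi>))" and a2: "x \<in> dval T f V (Box \<phi>)"
      obtain U1 where U1: "openin T U1" "x \<in> U1" "\<forall>y\<in>U1. y \<noteq> x \<longrightarrow> y \<in> dval T f V (Imp \<phi> \<psi>)"
        using a1 dval_Box by metis
      obtain U2 where U2: "openin T U2" "x \<in> U2" "\<forall>y\<in>U2. y \<noteq> x \<longrightarrow> y \<in> dval T f V \<phi>"
        using a2 dval_Box by metis
      show "x \<in> dval T f V (Box \<psi>)" unfolding dval_Box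
        by (rule conjI[OF x], rule exI[of _ "U1 \<inter> U2"]) (use U1 U2 in \<open>auto simp: dval_Imp\<close>)
    qed
  qed
next
  case (Four \<phi>)
  show ?case
  proof (rule antisym[OF dval_sub], rule subsetI)
    fix x assume x: "x \<in> topspace T"
    show "x \<in> dval T f V (Imp (Box \<phi>) (Box (Box \<phi>)))"
    proof (simp only: dval_Imp, intro conjI impI x)
      assume a1: "x \<in> dval T f V (Box \<phi>)"
      obtain U where U: "openin T U" "x \<in> U" "\<forall>y\<in>U. y \<noteq> x \<longrightarrow> y \<in> dval T f V \<phi>"
        using a1 dval_Box by metis
      obtain U0 C where UC: "openin T U0" "closedin T C" "U0 \<inter> C = {x}"
        using td x unfolding T_D_space_def by blast
      show "x \<in> dval T f V (Box (Box \<phi>))"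
      proof (rule dval_Box[THEN iffD2], rule conjI[OF x], rule exI[of _ "U \<inter> U0"], intro conjI ballI impI)
        show "openin T (U \<inter> U0)" using U UC by auto
        show "x \<in> U \<inter> U0" using U UC by auto
        fix y assume y: "y \<in> U \<inter> U0" "y \<noteq> x"
        have yC: "y \<notin> C" using y UC by auto
        have yt: "y \<in> topspace T" using y U openin_subset by auto
        have xC: "x \<in> C" using UC by auto
        show "y \<in> dval T f V (Box \<phi>)" unfolding dval_Box
        proof (rule conjI[OF yt], rule exI[of _ "U \<inter> (topspace T - C)"], intro conjI ballI impI)
          show "openin T (U \<inter> (topspace T - C))" using U UC by auto
          show "y \<in> U \<inter> (topspace T - C)" using y yC yt by auto
          fix z assume "z \<in> U \<inter> (topspace T - C)" "z \<noteq> y"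
          then show "z \<in> dval T f V \<phi>" using U xC by auto
        qed
      qed
    qed
  qed
next
  case (Next_neg \<phi>)
  have "f ` topspace T = topspace T" using hom unfolding inv_DTS_def
    using homeomorphic_imp_surjective_map by blast
  then show ?case by (auto simp: dval_Iff)
next
  case (Next_and \<phi> \<psi>)
  have "f ` topspace T = topspace T" using hom unfolding inv_DTS_def
    using homeomorphic_imp_surjective_map by blast
  then show ?case by (auto simp: dval_Iff)
next
  case (H \<phi>)
  have hm: "homeomorphic_map T T f" using hom unfolding inv_DTS_def .
  have sur: "f ` topspace T = topspace T" using homeomorphic_imp_surjective_map[OF hm] .
  have inj: "inj_on f (topspace T)" using homeomorphic_imp_injective_map[OF hm] .
  have om: "open_map T T f" using homeomorphic_imp_open_map[OF hm] .
  have cm: "continuous_map T T f" using homeomorphic_imp_continuous_map[OF hm] .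
  show ?case
  proof (rule antisym[OF dval_sub], rule subsetI)
    fix x assume x: "x \<in> topspace T"
    have fx: "f x \<in> topspace T" using x sur by auto
    have "x \<in> dval T f V (Box (Nxt \<phi>)) \<longleftrightarrow> x \<in> dval T f V (Nxt (Box \<phi>))"
    proof
      assume "x \<in> dval T f V (Box (Nxt \<phi>))"
      then obtain U where U: "openin T U" "x \<in> U" "\<forall>y\<in>U. y \<noteq> x \<longrightarrow> y \<in> dval T f V (Nxt \<phi>)"
        using dval_Box by metis
      have Ut: "U \<subseteq> topspace T" using U openin_subset by auto
      have "f x \<in> dval T f V (Box \<phi>)" unfolding dval_Box
      proof (rule conjI[OF fx], rule exI[of _ "f ` U"], intro conjI ballI impI)
        show "openin T (f ` U)" using om U unfolding open_map_def by auto
        show "f x \<in> f ` U" using U by auto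
        fix z assume z: "z \<in> f ` U" "z \<noteq> f x"
        then obtain y where "y \<in> U" "z = f y" by auto
        moreover have "y \<noteq> x" using z calculation by auto
        ultimately show "z \<in> dval T f V \<phi>" using U by auto
      qed
      then show "x \<in> dval T f V (Nxt (Box \<phi>))" using x by simp
    next
      assume "x \<in> dval T f V (Nxt (Box \<phi>))"
      then have "f x \<in> dval T f V (Box \<phi>)" by simp
      then obtain U where U: "openin T U" "f x \<in> U" "\<forall>y\<in>U. y \<noteq> f x \<longrightarrow> y \<in> dval T f V \<phi>"
        using dval_Box by metis
      show "x \<in> dval T f V (Box (Nxt \<phi>))" unfolding dval_Box
      proof (rule conjI[OF x], rule exI[of _ "{y \<in> topspace T. f y \<in> U}"], intro conjI ballI impI)
        show "openin T {y \<in> topspace T. f y \<in> U}" by (rule openin_continuous_map_preimage[OF cm U(1)])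
        show "x \<in> {y \<in> topspace T. f y \<in> U}" using x U by auto
        fix y assume y: "y \<in> {y \<in> topspace T. f y \<in> U}" "y \<noteq> x"
        then have "f y \<noteq> f x" using inj x unfolding inj_on_def by auto
        then show "y \<in> dval T f V (Nxt \<phi>)" using U y by auto
      qed
    qed
    then show "x \<in> dval T f V (Iff (Box (Nxt \<phi>)) (Nxt (Box \<phi>)))" using x by (simp only: dval_Iff)
  qed
next
  case (MP \<phi> \<psi>)
  then show ?case using dval_sub[of T f V \<psi>] by (auto simp: dval_Imp)
next
  case (Nec_box \<phi>)
  then show ?case by (auto simp: dval_Box intro: openin_topspace)
next
  case (Nec_next \<phi>)
  have "f ` topspace T = topspace T" using hom unfolding inv_DTS_def
    using homeomorphic_imp_surjective_map by blast
  then show ?case using Nec_next by auto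
qed


section \<open>Normal form\<close>

lemma iff_refl: "K4H (Iff a a)" by (rule prop0) simp
lemma iffD1: "K4H (Iff a b) \<Longrightarrow> K4H (Imp a b)" by (erule prop1) simp
lemma iffD2: "K4H (Iff a b) \<Longrightarrow> K4H (Imp b a)" by (erule prop1) simp
lemma iffMP: "K4H (Iff a b) \<Longrightarrow> K4H a \<Longrightarrow> K4H b" by (rule prop2[of "Iff a b" a]) auto

lemma box_imp: "K4H (Imp a b) \<Longrightarrow> K4H (Imp (Box a) (Box b))"
  by (rule K4H.MP[OF K4H.K], rule K4H.Nec_box)

lemma box_iff: "K4H (Iff a b) \<Longrightarrow> K4H (Iff (Box a) (Box b))"
  by (rule prop2[OF box_imp[OF iffD1] box_imp[OF iffD2]]) auto

lemma nxt_imp: assumes "K4H (Imp a b)" shows "K4H (Imp (Nxt a) (Nxt b))"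
proof -
  have 1: "K4H (Nxt (Neg (And a (Neg b))))" using K4H.Nec_next[OF assms] by (simp add: Imp_def)
  show ?thesis
    by (rule prop4[OF 1 K4H.Next_neg[of "And a (Neg b)"] K4H.Next_and[of a "Neg b"] K4H.Next_neg[of b]]) auto
qed

lemma nxt_iff: "K4H (Iff a b) \<Longrightarrow> K4H (Iff (Nxt a) (Nxt b))"
  by (rule prop2[OF nxt_imp[OF iffD1] nxt_imp[OF iffD2]]) auto

fun nxtn :: "nat \<Rightarrow> 'p fm \<Rightarrow> 'p fm" where
  "nxtn 0 a = a"
| "nxtn (Suc k) a = Nxt (nxtn k a)"

fun nf :: "'p fm \<Rightarrow> nat \<Rightarrow> 'p fm" where
  "nf (Atom p) k = nxtn k (Atom p)"
| "nf (And a b) k = And (nf a k) (nf b k)"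
| "nf (Neg a) k = Neg (nf a k)"
| "nf (Box a) k = Box (nf a k)"
| "nf (Nxt a) k = nf a (Suc k)"

lemma nxtn_nxt: "nxtn k (Nxt a) = nxtn (Suc k) a"
  by (induction k) auto

lemma nxtn_and: "K4H (Iff (nxtn k (And a b)) (And (nxtn k a) (nxtn k b)))"
proof (induction k)
  case 0 then show ?case by (simp add: iff_refl)
next
  case (Suc k)
  show ?case
    by (simp, rule prop2[OF nxt_iff[OF Suc] K4H.Next_and]) auto
qed

lemma nxtn_neg: "K4H (Iff (nxtn k (Neg a)) (Neg (nxtn k a)))"
proof (induction k)
  case 0 then show ?case by (simp add: iff_refl)
next
  case (Suc k)
  show ?case
    by (simp, rule prop2[OF nxt_iff[OF Suc] K4H.Next_neg[of "nxtn k a"]]) auto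
qed

lemma nxtn_box: "K4H (Iff (nxtn k (Box a)) (Box (nxtn k a)))"
proof (induction k)
  case 0 then show ?case by (simp add: iff_refl)
next
  case (Suc k)
  show ?case
    by (simp, rule prop2[OF nxt_iff[OF Suc] K4H.H]) auto
qed

lemma nf_equiv_k: "K4H (Iff (nxtn k \<phi>) (nf \<phi> k))"
proof (induction \<phi> arbitrary: k)
  case (Atom p) then show ?case by (simp add: iff_refl)
next
  case (And a b)
  show ?case by (simp, rule prop3[OF nxtn_and And.IH(1) And.IH(2)]) auto
next
  case (Neg a)
  show ?case by (simp, rule prop2[OF nxtn_neg Neg.IH]) auto
next
  case (Box a)
  show ?case by (simp, rule prop2[OF nxtn_box box_iff[OF Box.IH]]) auto
next
  case (Nxt a)
  show ?case using Nxt.IH[of "Suc k"] by (simp add: nxtn_nxt)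
qed

lemma nf_equiv: "K4H (Iff \<phi> (nf \<phi> 0))"
  using nf_equiv_k[of 0 \<phi>] by simp


definition top :: "'p fm" where "top = Imp (Atom undefined) (Atom undefined)"

lemma peval_top[simp]: "peval v top" by (simp add: top_def)
lemma K4H_top: "K4H top" by (rule prop0) simp

fun conj :: "'p fm list \<Rightarrow> 'p fm" where
  "conj [] = top"
| "conj (a # L) = And a (conj L)"

definition lit :: "'p fm set \<Rightarrow> 'p fm \<Rightarrow> 'p fm" where
  "lit G x = (if x \<in> G then x else Neg x)"

fun chr :: "'p fm list \<Rightarrow> 'p fm set \<Rightarrow> 'p fm" where
  "chr [] G = top"
| "chr (x # L) G = And (lit G x) (chr L G)"

definition cons :: "'p fm \<Rightarrow> bool" where "cons c \<longleftrightarrow> \<not> K4H (Neg c)"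

lemma conj_mem: "x \<in> set L \<Longrightarrow> K4H (Imp (conj L) x)"
proof (induction L)
  case Nil then show ?case by simp
next
  case (Cons a L)
  show ?case
  proof (cases "x = a")
    case True then show ?thesis by (intro prop0) simp
  next
    case False
    then have "K4H (Imp (conj L) x)" using Cons by simp
    then show ?thesis by (rule prop1) simp
  qed
qed

lemma conj_intro: "(\<And>x. x \<in> set L \<Longrightarrow> K4H (Imp c x)) \<Longrightarrow> K4H (Imp c (conj L))"
proof (induction L)
  case Nil then show ?case by (intro prop0) simp
next
  case (Cons a L)
  have 1: "K4H (Imp c a)" using Cons.prems by simp
  have 2: "K4H (Imp c (conj L))" using Cons by simp
  show ?case by (simp, rule prop2[OF 1 2]) simp
qed

lemma chr_lit: "x \<in> set L \<Longrightarrow> K4H (Imp (chr L G) (lit G x))"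
proof (induction L)
  case Nil then show ?case by simp
next
  case (Cons a L)
  show ?case
  proof (cases "x = a")
    case True then show ?thesis by (intro prop0) simp
  next
    case False
    then have "K4H (Imp (chr L G) (lit G x))" using Cons by simp
    then show ?thesis by (rule prop1) simp
  qed
qed

lemma chr_cong: "(\<And>x. x \<in> set L \<Longrightarrow> (x \<in> G \<longleftrightarrow> x \<in> G')) \<Longrightarrow> chr L G = chr L G'"
  by (induction L) (auto simp: lit_def)

lemma cons_mono: assumes "cons a" "\<And>v. peval v a \<Longrightarrow> peval v b" shows "cons b"
proof -
  have "K4H (Neg b) \<Longrightarrow> K4H (Neg a)" by (erule prop1) (use assms(2) in auto)
  then show ?thesis using assms(1) unfolding cons_def by blast
qed

lemma cons_split: assumes "cons c" shows "cons (And c x) \<or> cons (And c (Neg x))"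
proof -
  have "K4H (Neg (And c x)) \<Longrightarrow> K4H (Neg (And c (Neg x))) \<Longrightarrow> K4H (Neg c)"
    by (rule prop2[of "Neg (And c x)" "Neg (And c (Neg x))"]) auto
  then show ?thesis using assms unfolding cons_def by blast
qed

lemma extend: "distinct L \<Longrightarrow> cons c \<Longrightarrow> \<exists>G\<subseteq>set L. cons (And c (chr L G))"
proof (induction L arbitrary: c)
  case Nil
  have "cons (And c (chr [] {}))" by (rule cons_mono[OF Nil(2)]) simp
  then show ?case by blast
next
  case (Cons x L)
  have xn: "x \<notin> set L" and dL: "distinct L" using Cons.prems by auto
  from cons_split[OF Cons.prems(2), of x] show ?case
  proof
    assume "cons (And c x)"
    then obtain G where G: "G \<subseteq> set L" "cons (And (And c x) (chr L G))" using Cons.IH dL by blast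
    have eq: "chr L (insert x G) = chr L G" by (rule chr_cong) (use xn in auto)
    have "cons (And c (chr (x # L) (insert x G)))"
      by (rule cons_mono[OF G(2)]) (auto simp: eq lit_def)
    moreover have "insert x G \<subseteq> set (x # L)" using G by auto
    ultimately show ?thesis by blast
  next
    assume "cons (And c (Neg x))"
    then obtain G where G: "G \<subseteq> set L" "cons (And (And c (Neg x)) (chr L G))" using Cons.IH dL by blast
    have xG: "x \<notin> G" using G xn by auto
    have "cons (And c (chr (x # L) G))"
      by (rule cons_mono[OF G(2)]) (auto simp: xG lit_def)
    moreover have "G \<subseteq> set (x # L)" using G by auto
    ultimately show ?thesis by blast
  qed
qed

lemma clash2: assumes "cons c" "K4H (Imp c x)" "K4H (Imp c y)" "\<And>v. peval v x \<Longrightarrow> peval v y \<Longrightarrow> False"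
  shows False
proof -
  have "K4H (Neg c)" by (rule prop2[OF assms(2) assms(3)]) (use assms(4) in auto)
  then show False using assms(1) unfolding cons_def by blast
qed

lemma clash3: assumes "cons c" "K4H (Imp c x)" "K4H (Imp c y)" "K4H (Imp c z)"
  "\<And>v. peval v x \<Longrightarrow> peval v y \<Longrightarrow> peval v z \<Longrightarrow> False"
  shows False
proof -
  have "K4H (Neg c)" by (rule prop3[OF assms(2) assms(3) assms(4)]) (use assms(5) in auto)
  then show False using assms(1) unfolding cons_def by blast
qed

lemma mem_pos: "x \<in> set L \<Longrightarrow> x \<in> G \<Longrightarrow> K4H (Imp (chr L G) x)"
  using chr_lit[of x L G] by (simp add: lit_def)

lemma mem_neg: "x \<in> set L \<Longrightarrow> x \<notin> G \<Longrightarrow> K4H (Imp (chr L G) (Neg x))"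
  using chr_lit[of x L G] by (simp add: lit_def)


fun sf :: "'p fm \<Rightarrow> 'p fm list" where
  "sf (Atom p) = [Atom p]"
| "sf (And a b) = And a b # sf a @ sf b"
| "sf (Neg a) = Neg a # sf a"
| "sf (Box a) = Box a # sf a"
| "sf (Nxt a) = [Nxt a]"

lemma sf_self: "\<phi> \<in> set (sf \<phi>)"
  by (cases \<phi>) auto

lemma sf_trans: "\<psi> \<in> set (sf \<phi>) \<Longrightarrow> set (sf \<psi>) \<subseteq> set (sf \<phi>)"
  by (induction \<phi>) auto

lemma sf_And: "And a b \<in> set (sf \<phi>) \<Longrightarrow> a \<in> set (sf \<phi>) \<and> b \<in> set (sf \<phi>)"
  using sf_trans[of "And a b" \<phi>] sf_self[of a] sf_self[of b] by auto
lemma sf_Neg: "Neg a \<in> set (sf \<phi>) \<Longrightarrow> a \<in> set (sf \<phi>)"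
  using sf_trans[of "Neg a" \<phi>] sf_self[of a] by auto
lemma sf_Box: "Box a \<in> set (sf \<phi>) \<Longrightarrow> a \<in> set (sf \<phi>)"
  using sf_trans[of "Box a" \<phi>] sf_self[of a] by auto

fun normal :: "'p fm \<Rightarrow> bool" where
  "normal (Atom p) = True"
| "normal (And a b) = (normal a \<and> normal b)"
| "normal (Neg a) = normal a"
| "normal (Box a) = normal a"
| "normal (Nxt a) = (\<exists>k p. a = nxtn k (Atom p))"

lemma normal_nxtn: "normal (nxtn k (Atom p))"
  by (cases k) auto

lemma nf_normal: "normal (nf \<phi> k)"
  by (induction \<phi> arbitrary: k) (auto simp: normal_nxtn)

lemma normal_sf: "normal \<phi> \<Longrightarrow> \<psi> \<in> set (sf \<phi>) \<Longrightarrow> normal \<psi>"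
  by (induction \<phi>) auto

lemma size_sf: "\<psi> \<in> set (sf \<phi>) \<Longrightarrow> size \<psi> \<le> size \<phi>"
  by (induction \<phi>) auto

lemma size_nxtn: "k < size (nxtn k (Atom p))"
  by (induction k) auto

lemma ksat_nxtn: "ksat W R f V w (nxtn k X) = ksat W R f V ((f ^^ k) w) X"
  by (induction k arbitrary: w) (auto simp: funpow_Suc_right simp del: funpow.simps)

lemma box_and: "K4H (Imp (And (Box a) (Box b)) (Box (And a b)))"
proof -
  have 1: "K4H (Imp a (Imp b (And a b)))" by (rule prop0) simp
  have 2: "K4H (Imp (Box a) (Box (Imp b (And a b))))" by (rule box_imp[OF 1])
  show ?thesis by (rule prop2[OF 2 K4H.K[of b "And a b"]]) auto
qed

lemma box_conj: "K4H (Imp (conj (map Box L)) (Box (conj (map (\<lambda>t. And t (Box t)) L))))"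
proof (induction L)
  case Nil
  show ?case by (simp, rule prop1[OF K4H.Nec_box[OF K4H_top]]) simp
next
  case (Cons t L)
  show ?case
    by (simp, rule prop4[OF Cons K4H.Four[of t] box_and[of t "Box t"]
          box_and[of "And t (Box t)" "conj (map (\<lambda>t. And t (Box t)) L)"]]) auto
qed

fun unbox :: "'p fm list \<Rightarrow> 'p fm list" where
  "unbox [] = []"
| "unbox (Box a # L) = a # unbox L"
| "unbox (Atom p # L) = unbox L"
| "unbox (And a b # L) = unbox L"
| "unbox (Neg a # L) = unbox L"
| "unbox (Nxt a # L) = unbox L"

lemma unbox_set: "a \<in> set (unbox L) \<longleftrightarrow> Box a \<in> set L"
  by (induction L rule: unbox.induct) auto

section \<open>Finite canonical model\<close>

definition W0 :: "'p fm list \<Rightarrow> 'p fm set set" where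
  "W0 S = {G. G \<subseteq> set S \<and> cons (chr S G)}"

definition R0 :: "'p fm set \<Rightarrow> 'p fm set \<Rightarrow> bool" where
  "R0 G D \<longleftrightarrow> (\<forall>t. Box t \<in> G \<longrightarrow> t \<in> D \<and> Box t \<in> D)"

lemma and_mem:
  assumes G: "G \<in> W0 S" and m: "And a b \<in> set S" "a \<in> set S" "b \<in> set S"
  shows "And a b \<in> G \<longleftrightarrow> a \<in> G \<and> b \<in> G"
proof -
  have c: "cons (chr S G)" using G by (simp add: W0_def)
  show ?thesis
  proof (cases "And a b \<in> G"; cases "a \<in> G"; cases "b \<in> G")
  qed (auto intro: clash2[OF c mem_pos[OF m(1)] mem_neg[OF m(2)]]
                   clash2[OF c mem_pos[OF m(1)] mem_neg[OF m(3)]]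
                   clash3[OF c mem_neg[OF m(1)] mem_pos[OF m(2)] mem_pos[OF m(3)]])
qed

lemma neg_mem:
  assumes G: "G \<in> W0 S" and m: "Neg a \<in> set S" "a \<in> set S"
  shows "Neg a \<in> G \<longleftrightarrow> a \<notin> G"
proof -
  have c: "cons (chr S G)" using G by (simp add: W0_def)
  show ?thesis
  proof (cases "Neg a \<in> G"; cases "a \<in> G")
  qed (auto intro: clash2[OF c mem_pos[OF m(1)] mem_pos[OF m(2)]]
                   clash2[OF c mem_neg[OF m(1)] mem_neg[OF m(2)]])
qed

lemma box_mem:
  assumes G: "G \<in> W0 S" and dS: "distinct S" and m: "Box a \<in> set S" "a \<in> set S"
    and cl: "\<And>t. Box t \<in> set S \<Longrightarrow> t \<in> set S"
  shows "Box a \<in> G \<longleftrightarrow> (\<forall>D\<in>W0 S. R0 G D \<longrightarrow> a \<in> D)"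
proof
  assume "Box a \<in> G" then show "\<forall>D\<in>W0 S. R0 G D \<longrightarrow> a \<in> D" by (auto simp: R0_def)
next
  assume A: "\<forall>D\<in>W0 S. R0 G D \<longrightarrow> a \<in> D"
  show "Box a \<in> G"
  proof (rule ccontr)
    assume nb: "Box a \<notin> G"
    have cG: "cons (chr S G)" using G by (simp add: W0_def)
    define L0 where "L0 = unbox (filter (\<lambda>x. x \<in> G) S)"
    have L0: "t \<in> set L0 \<longleftrightarrow> Box t \<in> set S \<and> Box t \<in> G" for t
      by (auto simp: L0_def unbox_set)
    define M where "M = map (\<lambda>t. And t (Box t)) L0"
    define c where "c = And (conj M) (Neg a)"
    have cc: "cons c"
    proof (rule ccontr)
      assume "\<not> cons c"
      then have "K4H (Neg c)" by (simp add: cons_def)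
      then have 1: "K4H (Imp (conj M) a)" unfolding c_def by (rule prop1) auto
      have 2: "K4H (Imp (Box (conj M)) (Box a))" by (rule box_imp[OF 1])
      have 3: "K4H (Imp (chr S G) (conj (map Box L0)))"
        by (rule conj_intro) (auto simp: L0 intro: mem_pos)
      have 4: "K4H (Imp (conj (map Box L0)) (Box (conj M)))" unfolding M_def by (rule box_conj)
      have 5: "K4H (Imp (chr S G) (Neg (Box a)))" by (rule mem_neg[OF m(1) nb])
      have "K4H (Neg (chr S G))" by (rule prop4[OF 2 3 4 5]) auto
      then show False using cG by (simp add: cons_def)
    qed
    obtain D where D: "D \<subseteq> set S" "cons (And c (chr S D))" using extend[OF dS cc] by blast
    have DW: "D \<in> W0 S" unfolding W0_def using D by (auto intro: cons_mono)
    have cD: "cons (And c (chr S D))" using D by simp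
    have RD: "R0 G D" unfolding R0_def
    proof (intro allI impI conjI)
      fix t assume tG: "Box t \<in> G"
      have tS: "Box t \<in> set S" "t \<in> set S" using tG G cl by (auto simp: W0_def)
      have "And t (Box t) \<in> set M" using tS tG by (auto simp: M_def L0)
      then have im: "K4H (Imp (conj M) (And t (Box t)))" by (rule conj_mem)
      have im2: "K4H (Imp (And c (chr S D)) (And t (Box t)))" unfolding c_def by (rule prop1[OF im]) auto
      show "t \<in> D"
      proof (rule ccontr)
        assume "t \<notin> D"
        then have "K4H (Imp (chr S D) (Neg t))" by (rule mem_neg[OF tS(2)])
        then have "K4H (Imp (And c (chr S D)) (Neg t))" by (rule prop1) auto
        then show False by (rule clash2[OF cD im2]) auto
      qed
      show "Box t \<in> D"
      proof (rule ccontr)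
        assume "Box t \<notin> D"
        then have "K4H (Imp (chr S D) (Neg (Box t)))" by (rule mem_neg[OF tS(1)])
        then have "K4H (Imp (And c (chr S D)) (Neg (Box t)))" by (rule prop1) auto
        then show False by (rule clash2[OF cD im2]) auto
      qed
    qed
    have "a \<notin> D"
    proof
      assume "a \<in> D"
      then have "K4H (Imp (chr S D) a)" by (rule mem_pos[OF m(2)])
      then have "K4H (Imp (And c (chr S D)) a)" by (rule prop1) auto
      moreover have "K4H (Imp (And c (chr S D)) (Neg a))" unfolding c_def by (rule prop0) auto
      ultimately show False by (rule clash2[OF cD]) auto
    qed
    then show False using A DW RD by blast
  qed
qed


section \<open>Layered model\<close>

definition LW :: "'p fm list \<Rightarrow> nat \<Rightarrow> ('p fm set \<times> nat) set" where
  "LW S N = W0 S \<times> {..<N}"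

definition LR :: "'p fm list \<Rightarrow> nat \<Rightarrow> ('p fm set \<times> nat) \<Rightarrow> ('p fm set \<times> nat) \<Rightarrow> bool" where
  "LR S N x y \<longleftrightarrow> x \<in> LW S N \<and> y \<in> LW S N \<and> snd y = snd x \<and> R0 (fst x) (fst y)"

definition Lf :: "nat \<Rightarrow> ('p fm set \<times> nat) \<Rightarrow> ('p fm set \<times> nat)" where
  "Lf N x = (fst x, if Suc (snd x) < N then Suc (snd x) else 0)"

definition LV :: "'p \<Rightarrow> ('p fm set \<times> nat) set" where
  "LV p = {x. nxtn (snd x) (Atom p) \<in> fst x}"

lemma Lf_pow: "k < N \<Longrightarrow> (Lf N ^^ k) (G, 0) = (G, k)"
  by (induction k) (auto simp: Lf_def)

lemma layered_frame:
  assumes "G \<in> W0 S" "0 < N"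
  shows "inv_dyn_K4_frame (LW S N) (LR S N) (Lf N)"
  unfolding inv_dyn_K4_frame_def
proof (intro conjI)
  show "LW S N \<noteq> {}" using assms by (auto simp: LW_def)
  show "\<forall>w v. LR S N w v \<longrightarrow> w \<in> LW S N \<and> v \<in> LW S N" by (auto simp: LR_def)
  show "\<forall>u\<in>LW S N. \<forall>v\<in>LW S N. \<forall>w\<in>LW S N. LR S N u v \<longrightarrow> LR S N v w \<longrightarrow> LR S N u w"
    by (auto simp: LR_def R0_def)
  show "bij_betw (Lf N) (LW S N) (LW S N)"
  proof (rule bij_betw_byWitness[where f'="\<lambda>x. (fst x, if snd x = 0 then N - 1 else snd x - 1)"])
    show "\<forall>a\<in>LW S N. (fst (Lf N a), if snd (Lf N a) = 0 then N - 1 else snd (Lf N a) - 1) = a"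
      by (auto simp: LW_def Lf_def)
    show "\<forall>a'\<in>LW S N. Lf N (fst a', if snd a' = 0 then N - 1 else snd a' - 1) = a'"
      using assms(2) by (auto simp: LW_def Lf_def)
    show "Lf N ` LW S N \<subseteq> LW S N" using assms(2) by (auto simp: LW_def Lf_def)
    show "(\<lambda>x. (fst x, if snd x = 0 then N - 1 else snd x - 1)) ` LW S N \<subseteq> LW S N"
      using assms(2) by (auto simp: LW_def)
  qed
  show "\<forall>w\<in>LW S N. \<forall>v\<in>LW S N. LR S N w v = LR S N (Lf N w) (Lf N v)"
    using assms(2) by (auto simp: LR_def LW_def Lf_def)
qed

lemma truth:
  assumes nor: "normal \<phi>0" and S: "S = remdups (sf \<phi>0)" and N: "N = Suc (size \<phi>0)"
  shows "\<psi> \<in> set (sf \<phi>0) \<Longrightarrow> G \<in> W0 S \<Longrightarrow> ksat (LW S N) (LR S N) (Lf N) LV (G, 0) \<psi> \<longleftrightarrow> \<psi> \<in> G"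
proof (induction \<psi> arbitrary: G)
  case (Atom p)
  then show ?case by (simp add: LV_def)
next
  case (And a b)
  have m: "And a b \<in> set S" "a \<in> set S" "b \<in> set S" using And.prems sf_And S by auto
  have s: "a \<in> set (sf \<phi>0)" "b \<in> set (sf \<phi>0)" using sf_And[OF And.prems(1)] by auto
  show ?case using And.IH(1)[OF s(1) And.prems(2)] And.IH(2)[OF s(2) And.prems(2)] and_mem[OF And.prems(2) m] by simp
next
  case (Neg a)
  have m: "Neg a \<in> set S" "a \<in> set S" using Neg.prems sf_Neg S by auto
  have s: "a \<in> set (sf \<phi>0)" using sf_Neg[OF Neg.prems(1)] by auto
  show ?case using Neg.IH[OF s Neg.prems(2)] neg_mem[OF Neg.prems(2) m] by simp
next
  case (Box a)
  have m: "Box a \<in> set S" "a \<in> set S" using Box.prems sf_Box S by auto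
  have cl: "\<And>t. Box t \<in> set S \<Longrightarrow> t \<in> set S" using sf_Box S by auto
  have dS: "distinct S" using S by simp
  have "ksat (LW S N) (LR S N) (Lf N) LV (G, 0) (Box a) \<longleftrightarrow> (\<forall>D\<in>W0 S. R0 G D \<longrightarrow> a \<in> D)"
  proof -
    have "ksat (LW S N) (LR S N) (Lf N) LV (G, 0) (Box a) \<longleftrightarrow>
          (\<forall>D\<in>W0 S. R0 G D \<longrightarrow> ksat (LW S N) (LR S N) (Lf N) LV (D, 0) a)"
      using Box.prems(2) N by (auto simp: LR_def LW_def)
    also have "\<dots> \<longleftrightarrow> (\<forall>D\<in>W0 S. R0 G D \<longrightarrow> a \<in> D)"
      using Box.IH sf_Box[OF Box.prems(1)] by auto
    finally show ?thesis .
  qed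
  then show ?case using box_mem[OF Box.prems(2) dS m cl] by simp
next
  case (Nxt X)
  have "normal (Nxt X)" using normal_sf[OF nor Nxt.prems(1)] .
  then obtain k p where X: "X = nxtn k (Atom p)" by auto
  have e: "Nxt X = nxtn (Suc k) (Atom p)" using X by simp
  have "Suc k < N" using size_nxtn[of "Suc k" p] size_sf[OF Nxt.prems(1)] e N by simp
  then show ?case
    by (simp only: e ksat_nxtn Lf_pow) (simp add: LV_def)
qed

lemma completeness_layered:
  fixes \<phi> :: "'p fm"
  assumes "\<not> K4H \<phi>"
  shows "\<exists>(W :: ('p fm set \<times> nat) set) R f. finite W \<and> inv_dyn_K4_frame W R f \<and> \<not> kvalid W R f \<phi>"
proof -
  define \<phi>0 where "\<phi>0 = nf \<phi> 0"
  define S where "S = remdups (sf \<phi>0)"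
  define N where "N = Suc (size \<phi>0)"
  have eq: "K4H (Iff \<phi> \<phi>0)" unfolding \<phi>0_def by (rule nf_equiv)
  have n0: "\<not> K4H \<phi>0"
  proof
    assume "K4H \<phi>0" then have "K4H \<phi>" by (rule prop2[OF eq]) auto
    then show False using assms by simp
  qed
  have c0: "cons (Neg \<phi>0)"
    unfolding cons_def proof
    assume "K4H (Neg (Neg \<phi>0))" then have "K4H \<phi>0" by (rule prop1) auto
    then show False using n0 by simp
  qed
  have dS: "distinct S" unfolding S_def by simp
  obtain G where G: "G \<subseteq> set S" "cons (And (Neg \<phi>0) (chr S G))"
    using extend[OF dS c0] by blast
  have "cons (chr S G)" by (rule cons_mono[OF G(2)]) simp
  then have GW: "G \<in> W0 S" unfolding W0_def using G(1) by blast
  have sfs: "\<phi>0 \<in> set (sf \<phi>0)" by (rule sf_self)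
  have nG: "\<phi>0 \<notin> G"
  proof
    assume "\<phi>0 \<in> G"
    moreover have "\<phi>0 \<in> set S" using sfs S_def by simp
    ultimately have "K4H (Imp (chr S G) \<phi>0)" using mem_pos by blast
    then have "K4H (Imp (And (Neg \<phi>0) (chr S G)) \<phi>0)" by (rule prop1) auto
    moreover have "K4H (Imp (And (Neg \<phi>0) (chr S G)) (Neg \<phi>0))" by (rule prop0) auto
    ultimately show False by (rule clash2[OF G(2)]) auto
  qed
  have nor: "normal \<phi>0" unfolding \<phi>0_def by (rule nf_normal)
  have ns: "\<not> ksat (LW S N) (LR S N) (Lf N) LV (G, 0) \<phi>0"
    using truth[OF nor S_def N_def sfs GW] nG by simp
  have fr: "inv_dyn_K4_frame (LW S N) (LR S N) (Lf N)" using layered_frame[OF GW] N_def by simp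
  have GL: "(G, 0) \<in> LW S N" using GW N_def by (simp add: LW_def)
  have "ksat (LW S N) (LR S N) (Lf N) LV (G, 0) (Iff \<phi> \<phi>0)" using ksound[OF fr eq] GL by simp
  then have "\<not> ksat (LW S N) (LR S N) (Lf N) LV (G, 0) \<phi>" using ns by simp
  then have "\<not> kvalid (LW S N) (LR S N) (Lf N) \<phi>" using GL unfolding kvalid_def by auto
  moreover have "finite (LW S N)"
  proof -
    have "W0 S \<subseteq> Pow (set S)" by (auto simp: W0_def)
    then have "finite (W0 S)" by (rule finite_subset) simp
    then show ?thesis by (simp add: LW_def)
  qed
  ultimately have all: "finite (LW S N) \<and> inv_dyn_K4_frame (LW S N) (LR S N) (Lf N) \<and> \<not> kvalid (LW S N) (LR S N) (Lf N) \<phi>"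
    using fr by simp
  show ?thesis by (rule exI[where x="LW S N"], rule exI[where x="LR S N"], rule exI[where x="Lf N"], rule all)
qed


section \<open>Alexandrov topology of a strict order\<close>

definition upcl :: "'b set \<Rightarrow> ('b \<Rightarrow> 'b \<Rightarrow> bool) \<Rightarrow> 'b set \<Rightarrow> bool" where
  "upcl X lt U \<longleftrightarrow> U \<subseteq> X \<and> (\<forall>x\<in>U. \<forall>y. lt x y \<longrightarrow> y \<in> U)"

definition alex :: "'b set \<Rightarrow> ('b \<Rightarrow> 'b \<Rightarrow> bool) \<Rightarrow> 'b topology" where
  "alex X lt = topology (upcl X lt)"

lemma istop_upcl: "istopology (upcl X lt)"
  unfolding istopology_def upcl_def by blast

lemma alex_open: "openin (alex X lt) U \<longleftrightarrow> U \<subseteq> X \<and> (\<forall>x\<in>U. \<forall>y. lt x y \<longrightarrow> y \<in> U)"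
  unfolding alex_def topology_inverse'[OF istop_upcl] upcl_def by simp

locale sorder =
  fixes X :: "'b set" and lt :: "'b \<Rightarrow> 'b \<Rightarrow> bool"
  assumes rel: "\<And>x y. lt x y \<Longrightarrow> x \<in> X \<and> y \<in> X"
    and irr: "\<And>x. \<not> lt x x"
    and tr: "\<And>x y z. lt x y \<Longrightarrow> lt y z \<Longrightarrow> lt x z"
begin

lemma topspace_alex: "topspace (alex X lt) = X"
proof
  show "topspace (alex X lt) \<subseteq> X" unfolding topspace_def alex_open by auto
  have "openin (alex X lt) X" unfolding alex_open using rel by auto
  then show "X \<subseteq> topspace (alex X lt)" by (rule openin_subset)
qed

lemma up_open: assumes xX: "x \<in> X" shows "openin (alex X lt) (insert x {y. lt x y})"
proof -
  have 1: "insert x {y. lt x y} \<subseteq> X" using xX rel by auto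
  have 2: "\<forall>z\<in>insert x {y. lt x y}. \<forall>y. lt z y \<longrightarrow> y \<in> insert x {y. lt x y}"
    using tr by auto
  show ?thesis unfolding alex_open using 1 2 by simp
qed

lemma derived_alex: "x \<in> (alex X lt) derived_set_of A \<longleftrightarrow> x \<in> X \<and> (\<exists>y\<in>A. lt x y)"
proof
  assume a: "x \<in> (alex X lt) derived_set_of A"
  have xX: "x \<in> X" using a derived_set_of_subset_topspace[of "alex X lt" A] topspace_alex by auto
  have all: "\<forall>T. x \<in> T \<and> openin (alex X lt) T \<longrightarrow> (\<exists>y\<noteq>x. y \<in> A \<and> y \<in> T)"
    using a unfolding in_derived_set_of by simp
  have "\<exists>y\<noteq>x. y \<in> A \<and> y \<in> insert x {y. lt x y}"
    using all[rule_format, OF conjI[OF insertI1 up_open[OF xX]]] .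
  then obtain y where "y \<noteq> x" "y \<in> A" "y \<in> insert x {y. lt x y}" by blast
  then show "x \<in> X \<and> (\<exists>y\<in>A. lt x y)" using xX by auto
next
  assume a: "x \<in> X \<and> (\<exists>y\<in>A. lt x y)"
  then obtain y where y: "y \<in> A" "lt x y" by blast
  have yx: "y \<noteq> x" using y(2) irr by auto
  have "\<forall>T. x \<in> T \<and> openin (alex X lt) T \<longrightarrow> (\<exists>y\<noteq>x. y \<in> A \<and> y \<in> T)"
  proof (intro allI impI)
    fix T assume T: "x \<in> T \<and> openin (alex X lt) T"
    then have "y \<in> T" using y(2) unfolding alex_open by auto
    then show "\<exists>y\<noteq>x. y \<in> A \<and> y \<in> T" using yx y(1) by auto
  qed
  then show "x \<in> (alex X lt) derived_set_of A"
    unfolding in_derived_set_of topspace_alex using a by simp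
qed

lemma TD_alex: "T_D_space (alex X lt)"
  unfolding T_D_space_def topspace_alex
proof
  fix x assume xX: "x \<in> X"
  define C where "C = {z \<in> X. z = x \<or> lt z x}"
  have up: "\<forall>z\<in>X - C. \<forall>y. lt z y \<longrightarrow> y \<in> X - C"
  proof (intro ballI allI impI)
    fix z y assume z: "z \<in> X - C" and l: "lt z y"
    have yX: "y \<in> X" using rel l by auto
    have "y \<noteq> x" using z l C_def by auto
    moreover have "\<not> lt y x" using z l tr C_def by blast
    ultimately show "y \<in> X - C" using yX C_def by auto
  qed
  have Csub: "C \<subseteq> X" unfolding C_def by blast
  have "closedin (alex X lt) C"
    unfolding closedin_def topspace_alex alex_open by (intro conjI Csub Diff_subset up)
  moreover have "insert x {y. lt x y} \<inter> C = {x}"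
  proof
    show "insert x {y. lt x y} \<inter> C \<subseteq> {x}"
    proof
      fix y assume y: "y \<in> insert x {y. lt x y} \<inter> C"
      show "y \<in> {x}"
      proof (rule ccontr)
        assume "y \<notin> {x}"
        then have "lt x y" "lt y x" using y C_def by auto
        then show False using tr irr by blast
      qed
    qed
    show "{x} \<subseteq> insert x {y. lt x y} \<inter> C" using xX C_def by auto
  qed
  ultimately show "\<exists>U C. openin (alex X lt) U \<and> closedin (alex X lt) C \<and> U \<inter> C = {x}"
    using up_open[OF xX] by blast
qed

lemma cont_alex:
  assumes im: "F ` X = X"
    and mono: "\<And>x y. x \<in> X \<Longrightarrow> y \<in> X \<Longrightarrow> lt (F x) (F y) \<longleftrightarrow> lt x y"
  shows "continuous_map (alex X lt) (alex X lt) F"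
proof -
  have 1: "F \<in> topspace (alex X lt) \<rightarrow> topspace (alex X lt)" using im topspace_alex by auto
  have 2: "openin (alex X lt) {x \<in> topspace (alex X lt). F x \<in> U}" if U: "openin (alex X lt) U" for U
  proof -
    have U': "U \<subseteq> X" "\<And>x y. x \<in> U \<Longrightarrow> lt x y \<Longrightarrow> y \<in> U" using U unfolding alex_open by auto
    have "\<And>x y. x \<in> X \<Longrightarrow> F x \<in> U \<Longrightarrow> lt x y \<Longrightarrow> y \<in> X \<and> F y \<in> U"
    proof -
      fix x y assume x: "x \<in> X" "F x \<in> U" and l: "lt x y"
      have yX: "y \<in> X" using rel l by blast
      have "lt (F x) (F y)" using mono[OF x(1) yX] l by simp
      then show "y \<in> X \<and> F y \<in> U" using U'(2)[OF x(2)] yX by simp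
    qed
    then show ?thesis unfolding alex_open topspace_alex by auto
  qed
  show ?thesis unfolding continuous_map_def using 1 2 by blast
qed

lemma openmap_alex:
  assumes im: "F ` X = X"
    and mono: "\<And>x y. x \<in> X \<Longrightarrow> y \<in> X \<Longrightarrow> lt (F x) (F y) \<longleftrightarrow> lt x y"
  shows "open_map (alex X lt) (alex X lt) F"
  unfolding open_map_def
proof (intro allI impI)
  fix U assume U: "openin (alex X lt) U"
  have U': "U \<subseteq> X" "\<And>x y. x \<in> U \<Longrightarrow> lt x y \<Longrightarrow> y \<in> U" using U unfolding alex_open by auto
  have 1: "F ` U \<subseteq> X" using U'(1) im by auto
  have 2: "y \<in> F ` U" if z: "z \<in> F ` U" and l: "lt z y" for z y
  proof -
    obtain x where x: "x \<in> U" "z = F x" using z by blast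
    have yX: "y \<in> X" using rel l by blast
    obtain u where u: "u \<in> X" "y = F u" using yX im by blast
    have xX: "x \<in> X" using x U'(1) by auto
    have "lt x u" using mono[OF xX u(1)] x u l by simp
    then show "y \<in> F ` U" using U'(2)[OF x(1)] u by simp
  qed
  show "openin (alex X lt) (F ` U)" unfolding alex_open using 1 2 by blast
qed

lemma homeo_alex:
  assumes im: "F ` X = X" and inj: "inj_on F X"
    and mono: "\<And>x y. x \<in> X \<Longrightarrow> y \<in> X \<Longrightarrow> lt (F x) (F y) \<longleftrightarrow> lt x y"
  shows "homeomorphic_map (alex X lt) (alex X lt) F"
  by (rule bijective_open_imp_homeomorphic_map[OF cont_alex[OF im mono] openmap_alex[OF im mono]])
     (simp_all add: topspace_alex im inj)

lemma dval_alex: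
  assumes b: "\<And>x y. lt x y \<Longrightarrow> R (\<pi> x) (\<pi> y)"
    and c: "\<And>x v. x \<in> X \<Longrightarrow> R (\<pi> x) v \<Longrightarrow> \<exists>y. lt x y \<and> \<pi> y = v"
    and d: "\<And>x. x \<in> X \<Longrightarrow> F x \<in> X \<and> \<pi> (F x) = f (\<pi> x)"
    and e: "\<And>u v. R u v \<Longrightarrow> v \<in> W"
    and e2: "\<And>x. x \<in> X \<Longrightarrow> \<pi> x \<in> W"
  shows "x \<in> X \<Longrightarrow> x \<in> dval (alex X lt) F (\<lambda>q. {x \<in> X. \<pi> x \<in> V q}) \<psi> \<longleftrightarrow> ksat W R f V (\<pi> x) \<psi>"
proof (induction \<psi> arbitrary: x)
  case (Atom p)
  then show ?case by (simp add: topspace_alex)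
next
  case (And a b)
  then show ?case by simp
next
  case (Neg a)
  then show ?case by (simp add: topspace_alex)
next
  case (Box a)
  let ?T = "alex X lt" and ?V = "\<lambda>q. {x \<in> X. \<pi> x \<in> V q}"
  have "x \<in> dval ?T F ?V (Box a) \<longleftrightarrow> \<not> (\<exists>y\<in>X - dval ?T F ?V a. lt x y)"
    using Box.prems by (simp add: topspace_alex derived_alex)
  also have "\<dots> \<longleftrightarrow> (\<forall>y. lt x y \<longrightarrow> ksat W R f V (\<pi> y) a)"
  proof -
    have "\<And>y. lt x y \<Longrightarrow> y \<in> dval ?T F ?V a \<longleftrightarrow> ksat W R f V (\<pi> y) a" using Box.IH rel by blast
    then show ?thesis using rel by blast
  qed
  also have "\<dots> \<longleftrightarrow> (\<forall>v\<in>W. R (\<pi> x) v \<longrightarrow> ksat W R f V v a)"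
  proof
    assume A: "\<forall>y. lt x y \<longrightarrow> ksat W R f V (\<pi> y) a"
    show "\<forall>v\<in>W. R (\<pi> x) v \<longrightarrow> ksat W R f V v a"
    proof (intro ballI impI)
      fix v assume "v \<in> W" "R (\<pi> x) v"
      then obtain y where "lt x y" "\<pi> y = v" using c Box.prems by blast
      then show "ksat W R f V v a" using A by blast
    qed
  next
    assume A: "\<forall>v\<in>W. R (\<pi> x) v \<longrightarrow> ksat W R f V v a"
    show "\<forall>y. lt x y \<longrightarrow> ksat W R f V (\<pi> y) a"
      using A b e by blast
  qed
  finally show ?case by simp
next
  case (Nxt a)
  then show ?case using d by (simp add: topspace_alex)
qed

end


lemma inj_into_infinite:
  assumes "countable (A :: 'b set)" "infinite (UNIV :: 'a set)"
  shows "\<exists>e :: 'b \<Rightarrow> 'a. inj_on e A"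
proof -
  obtain g :: "'b \<Rightarrow> nat" where g: "inj_on g A" using countableE[OF assms(1)] by blast
  obtain h :: "nat \<Rightarrow> 'a" where h: "inj h" using infinite_countable_subset[OF assms(2)] by blast
  have "inj_on h (g ` A)" by (rule inj_on_subset[OF h subset_UNIV])
  then have "inj_on (h \<circ> g) A" by (rule comp_inj_on[OF g])
  then show ?thesis by blast
qed

lemma kripke_transport:
  fixes W :: "'b set" and \<phi> :: "'p fm"
  assumes fin: "finite W" and fr: "inv_dyn_K4_frame W R f" and nv: "\<not> kvalid W R f \<phi>"
    and inf: "infinite (UNIV :: 'a set)"
  shows "\<exists>(W' :: 'a set) R' f'. finite W' \<and> inv_dyn_K4_frame W' R' f' \<and> \<not> kvalid W' R' f' \<phi>"
proof -
  obtain e :: "'b \<Rightarrow> 'a" where inj: "inj_on e W" using inj_into_infinite[OF countable_finite[OF fin] inf] by blast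
  define p where "p = the_inv_into W e"
  have pe: "\<And>w. w \<in> W \<Longrightarrow> p (e w) = w" unfolding p_def using the_inv_into_f_f[OF inj] by simp
  define W' where "W' = e ` W"
  have pW: "\<And>x. x \<in> W' \<Longrightarrow> p x \<in> W \<and> e (p x) = x" unfolding W'_def using pe by auto
  define R' where "R' = (\<lambda>x y. x \<in> W' \<and> y \<in> W' \<and> R (p x) (p y))"
  define f' where "f' = e \<circ> f \<circ> p"
  obtain V w where w: "w \<in> W" "\<not> ksat W R f V w \<phi>" using nv unfolding kvalid_def by blast
  define V' where "V' = (\<lambda>q. {x \<in> W'. p x \<in> V q})"
  have fW: "\<And>u. u \<in> W \<Longrightarrow> f u \<in> W" using frame_bij[OF fr] unfolding bij_betw_def by auto
  have key: "\<And>u. u \<in> W \<Longrightarrow> ksat W' R' f' V' (e u) \<psi> \<longleftrightarrow> ksat W R f V u \<psi>" for \<psi>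
  proof (induction \<psi>)
    case (Atom q) then show ?case by (simp add: V'_def W'_def pe)
  next
    case (And a b) then show ?case by simp
  next
    case (Neg a) then show ?case by simp
  next
    case (Box a)
    have "ksat W' R' f' V' (e u) (Box a) \<longleftrightarrow> (\<forall>v\<in>W. R' (e u) (e v) \<longrightarrow> ksat W' R' f' V' (e v) a)"
      by (simp add: W'_def)
    also have "\<dots> \<longleftrightarrow> (\<forall>v\<in>W. R u v \<longrightarrow> ksat W R f V v a)"
      using Box pe by (simp add: R'_def W'_def)
    finally show ?case by simp
  next
    case (Nxt a)
    then show ?case using fW pe by (simp add: f'_def)
  qed
  have fr': "inv_dyn_K4_frame W' R' f'"
    unfolding inv_dyn_K4_frame_def
  proof (intro conjI)
    show "W' \<noteq> {}" using w W'_def by auto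
    show "\<forall>w v. R' w v \<longrightarrow> w \<in> W' \<and> v \<in> W'" by (simp add: R'_def)
    show "\<forall>u\<in>W'. \<forall>v\<in>W'. \<forall>w\<in>W'. R' u v \<longrightarrow> R' v w \<longrightarrow> R' u w"
    proof (intro ballI impI)
      fix x y z assume xyz: "x \<in> W'" "y \<in> W'" "z \<in> W'" and r: "R' x y" "R' y z"
      have "p x \<in> W" "p y \<in> W" "p z \<in> W" using xyz pW by auto
      moreover have "R (p x) (p y)" "R (p y) (p z)" using r R'_def by auto
      ultimately have "R (p x) (p z)" using frame_trans[OF fr] by blast
      then show "R' x z" using xyz R'_def by simp
    qed
    have b1: "bij_betw p W' W" unfolding p_def W'_def by (rule bij_betw_the_inv_into[OF inj_on_imp_bij_betw[OF inj]])
    have b2: "bij_betw e W W'" unfolding W'_def by (rule inj_on_imp_bij_betw[OF inj])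
    show "bij_betw f' W' W'" unfolding f'_def comp_assoc
      by (rule bij_betw_trans[OF bij_betw_trans[OF b1 frame_bij[OF fr]] b2])
    show "\<forall>w\<in>W'. \<forall>v\<in>W'. R' w v = R' (f' w) (f' v)"
    proof (intro ballI)
      fix x y assume xy: "x \<in> W'" "y \<in> W'"
      have px: "p x \<in> W" "p y \<in> W" using xy pW by auto
      have f1: "f' x \<in> W'" "f' y \<in> W'" using px fW W'_def f'_def by auto
      have f2: "p (f' x) = f (p x)" "p (f' y) = f (p y)" using px fW pe f'_def by auto
      show "R' x y = R' (f' x) (f' y)" unfolding R'_def using xy f1 f2 frame_com[OF fr px] by simp
    qed
  qed
  have "\<not> kvalid W' R' f' \<phi>" unfolding kvalid_def using key[OF w(1)] w W'_def by auto
  moreover have "finite W'" unfolding W'_def using fin by simp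
  ultimately have all: "finite W' \<and> inv_dyn_K4_frame W' R' f' \<and> \<not> kvalid W' R' f' \<phi>" using fr' by simp
  show ?thesis by (rule exI[where x=W'], rule exI[where x=R'], rule exI[where x=f'], rule all)
qed


lemma topo_construct:
  fixes W :: "'a set" and \<phi> :: "'p fm"
  assumes fin: "finite W" and fr: "inv_dyn_K4_frame W R f" and nv: "\<not> kvalid W R f \<phi>"
    and inf: "infinite (UNIV :: 'a set)"
  shows "\<exists>(T :: 'a topology) F. inv_DTS T F \<and> T_D_space T \<and> \<not> dvalid T F \<phi>"
proof -
  define X0 :: "('a \<times> nat) set" where "X0 = W \<times> UNIV"
  have cX0: "countable X0" unfolding X0_def
    by (intro countable_SIGMA countable_finite[OF fin]) simp
  obtain e :: "'a \<times> nat \<Rightarrow> 'a" where inj: "inj_on e X0" using inj_into_infinite[OF cX0 inf] by blast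
  define \<iota> where "\<iota> = the_inv_into X0 e"
  have ie: "\<And>u. u \<in> X0 \<Longrightarrow> \<iota> (e u) = u" unfolding \<iota>_def using the_inv_into_f_f[OF inj] by simp
  define X where "X = e ` X0"
  have iX: "\<And>x. x \<in> X \<Longrightarrow> \<iota> x \<in> X0 \<and> e (\<iota> x) = x" unfolding X_def using ie by auto
  have fW: "\<And>u. u \<in> W \<Longrightarrow> f u \<in> W" using frame_bij[OF fr] unfolding bij_betw_def by auto
  define lt0 :: "'a \<times> nat \<Rightarrow> 'a \<times> nat \<Rightarrow> bool" where "lt0 = (\<lambda>a b. fst a \<in> W \<and> fst b \<in> W \<and> R (fst a) (fst b) \<and> (\<not> R (fst b) (fst a) \<or> snd a < snd b))"
  have lt0_tr: "lt0 a c" if ab: "lt0 a b" and bc: "lt0 b c" for a b c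
  proof -
    have W3: "fst a \<in> W" "fst b \<in> W" "fst c \<in> W" using ab bc lt0_def by auto
    have r: "R (fst a) (fst b)" "R (fst b) (fst c)" using ab bc lt0_def by auto
    have rac: "R (fst a) (fst c)" using frame_trans[OF fr W3 r] .
    show ?thesis
    proof (cases "R (fst c) (fst a)")
      case True
      have "R (fst b) (fst a)" using frame_trans[OF fr W3(2) W3(3) W3(1) r(2) True] .
      then have 1: "snd a < snd b" using ab lt0_def by auto
      have "R (fst c) (fst b)" using frame_trans[OF fr W3(3) W3(1) W3(2) True r(1)] .
      then have 2: "snd b < snd c" using bc lt0_def by auto
      show ?thesis using 1 2 W3 rac lt0_def by auto
    next
      case False
      then show ?thesis using W3 rac lt0_def by auto
    qed
  qed
  define lt where "lt = (\<lambda>x y. x \<in> X \<and> y \<in> X \<and> lt0 (\<iota> x) (\<iota> y))"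
  define F where "F = (\<lambda>x. e (f (fst (\<iota> x)), snd (\<iota> x)))"
  define \<pi> where "\<pi> = (\<lambda>x. fst (\<iota> x))"
  interpret so: sorder X lt
  proof
    show "\<And>x y. lt x y \<Longrightarrow> x \<in> X \<and> y \<in> X" unfolding lt_def by simp
    show "\<And>x. \<not> lt x x" unfolding lt_def lt0_def by simp
    show "\<And>x y z. lt x y \<Longrightarrow> lt y z \<Longrightarrow> lt x z" unfolding lt_def using lt0_tr by blast
  qed
  have X0W: "\<And>u. u \<in> X0 \<Longrightarrow> fst u \<in> W" unfolding X0_def by auto
  have FX: "\<And>x. x \<in> X \<Longrightarrow> F x \<in> X \<and> \<iota> (F x) = (f (\<pi> x), snd (\<iota> x))"
  proof -
    fix x assume x: "x \<in> X"
    have "(f (\<pi> x), snd (\<iota> x)) \<in> X0" using iX[OF x] X0W fW unfolding X0_def \<pi>_def by auto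
    then show "F x \<in> X \<and> \<iota> (F x) = (f (\<pi> x), snd (\<iota> x))" unfolding F_def \<pi>_def X_def using ie by auto
  qed
  have b: "\<And>x y. lt x y \<Longrightarrow> R (\<pi> x) (\<pi> y)" unfolding lt_def lt0_def \<pi>_def by simp
  have c: "\<exists>y. lt x y \<and> \<pi> y = v" if x: "x \<in> X" and r: "R (\<pi> x) v" for x v
  proof -
    have vW: "v \<in> W" using frame_rel[OF fr r] by simp
    have xW: "\<pi> x \<in> W" using iX[OF x] X0W \<pi>_def by auto
    define j where "j = (if R v (\<pi> x) then Suc (snd (\<iota> x)) else 0)"
    have u: "(v, j) \<in> X0" using vW X0_def by auto
    have "lt x (e (v, j))" unfolding lt_def lt0_def using x u ie[OF u] vW xW r X_def j_def \<pi>_def by auto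
    moreover have "\<pi> (e (v, j)) = v" using ie[OF u] \<pi>_def by simp
    ultimately show ?thesis by blast
  qed
  have d: "\<And>x. x \<in> X \<Longrightarrow> F x \<in> X \<and> \<pi> (F x) = f (\<pi> x)" using FX \<pi>_def by simp
  have e1: "\<And>u v. R u v \<Longrightarrow> v \<in> W" using frame_rel[OF fr] by blast
  have e2: "\<And>x. x \<in> X \<Longrightarrow> \<pi> x \<in> W" using iX X0W \<pi>_def by auto
  have im: "F ` X = X"
  proof
    show "F ` X \<subseteq> X" using FX by auto
    show "X \<subseteq> F ` X"
    proof
      fix y assume y: "y \<in> X"
      have yW: "\<pi> y \<in> W" using e2[OF y] .
      have "f ` W = W" using frame_bij[OF fr] unfolding bij_betw_def by simp
      then obtain u where u: "u \<in> W" "f u = \<pi> y" using yW by force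
      have uX0: "(u, snd (\<iota> y)) \<in> X0" using u X0_def by auto
      have "F (e (u, snd (\<iota> y))) = y"
        unfolding F_def using ie[OF uX0] u iX[OF y] \<pi>_def by (cases "\<iota> y") auto
      moreover have "e (u, snd (\<iota> y)) \<in> X" using uX0 X_def by auto
      ultimately show "y \<in> F ` X" by force
    qed
  qed
  have injF: "inj_on F X"
  proof (rule inj_onI)
    fix x y assume x: "x \<in> X" and y: "y \<in> X" and eq: "F x = F y"
    have "\<iota> (F x) = \<iota> (F y)" using eq by simp
    then have 1: "f (\<pi> x) = f (\<pi> y)" "snd (\<iota> x) = snd (\<iota> y)" using FX[OF x] FX[OF y] by auto
    have "inj_on f W" using frame_bij[OF fr] unfolding bij_betw_def by simp
    then have "\<pi> x = \<pi> y" using 1(1) e2[OF x] e2[OF y] unfolding inj_on_def by blast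
    then have "\<iota> x = \<iota> y" using 1(2) \<pi>_def by (simp add: prod_eq_iff)
    then show "x = y" using iX[OF x] iX[OF y] by metis
  qed
  have mono: "lt (F x) (F y) \<longleftrightarrow> lt x y" if x: "x \<in> X" and y: "y \<in> X" for x y
  proof -
    have px: "\<pi> x \<in> W" "\<pi> y \<in> W" using e2 x y by auto
    have "lt (F x) (F y) \<longleftrightarrow> lt0 (f (\<pi> x), snd (\<iota> x)) (f (\<pi> y), snd (\<iota> y))"
      unfolding lt_def using FX[OF x] FX[OF y] by simp
    also have "\<dots> \<longleftrightarrow> lt0 (\<iota> x) (\<iota> y)"
      unfolding lt0_def using px fW frame_com[OF fr px] frame_com[OF fr px(2) px(1)] \<pi>_def by auto
    also have "\<dots> \<longleftrightarrow> lt x y" unfolding lt_def using x y by simp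
    finally show ?thesis .
  qed
  have hom: "inv_DTS (alex X lt) F" unfolding inv_DTS_def by (rule so.homeo_alex[OF im injF mono])
  have td: "T_D_space (alex X lt)" by (rule so.TD_alex)
  obtain V w where w: "w \<in> W" "\<not> ksat W R f V w \<phi>" using nv unfolding kvalid_def by blast
  have wX0: "(w, 0) \<in> X0" using w X0_def by auto
  have x0: "e (w, 0) \<in> X" using wX0 X_def by auto
  have px0: "\<pi> (e (w, 0)) = w" using ie[OF wX0] \<pi>_def by simp
  have "e (w, 0) \<notin> dval (alex X lt) F (\<lambda>q. {x \<in> X. \<pi> x \<in> V q}) \<phi>"
    using so.dval_alex[where R=R and \<pi>=\<pi> and F=F and f=f and W=W and V=V and \<psi>=\<phi>, OF b c d e1 e2 x0] px0 w(2) by simp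
  then have "\<not> dvalid (alex X lt) F \<phi>" unfolding dvalid_def using x0 so.topspace_alex by blast
  then have all: "inv_DTS (alex X lt) F \<and> T_D_space (alex X lt) \<and> \<not> dvalid (alex X lt) F \<phi>" using hom td by simp
  show ?thesis by (rule exI[where x="alex X lt"], rule exI[where x=F], rule all)
qed


theorem mainTheorem9:
  fixes \<phi> :: "'p fm"
  assumes "infinite (UNIV :: 'a set)"
  shows "(K4H \<phi> \<longleftrightarrow>
           (\<forall>(W :: 'a set) R f. finite W \<and> inv_dyn_K4_frame W R f \<longrightarrow> kvalid W R f \<phi>))
       \<and> ((\<forall>(W :: 'a set) R f. finite W \<and> inv_dyn_K4_frame W R f \<longrightarrow> kvalid W R f \<phi>) \<longleftrightarrow>
           (\<forall>(T :: 'a topology) f. inv_DTS T f \<and> T_D_space T \<longrightarrow> dvalid T f \<phi>))"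
proof -
  have A: "\<forall>(W :: 'a set) R f. finite W \<and> inv_dyn_K4_frame W R f \<longrightarrow> kvalid W R f \<phi>" if d: "K4H \<phi>"
    unfolding kvalid_def using ksound[OF _ d] by blast
  have B: "\<forall>(T :: 'a topology) f. inv_DTS T f \<and> T_D_space T \<longrightarrow> dvalid T f \<phi>" if d: "K4H \<phi>"
    unfolding dvalid_def using tsound[OF _ _ d] by blast
  have C: "K4H \<phi>" if v: "\<forall>(W :: 'a set) R f. finite W \<and> inv_dyn_K4_frame W R f \<longrightarrow> kvalid W R f \<phi>"
  proof (rule ccontr)
    assume "\<not> K4H \<phi>"
    then obtain W0 :: "('p fm set \<times> nat) set" and R0 f0 where
      w: "finite W0" "inv_dyn_K4_frame W0 R0 f0" "\<not> kvalid W0 R0 f0 \<phi>"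
      using completeness_layered by blast
    obtain W' :: "'a set" and R' f' where "finite W'" "inv_dyn_K4_frame W' R' f'" "\<not> kvalid W' R' f' \<phi>"
      using kripke_transport[OF w assms] by blast
    then show False using v by blast
  qed
  have D: "\<forall>(W :: 'a set) R f. finite W \<and> inv_dyn_K4_frame W R f \<longrightarrow> kvalid W R f \<phi>"
    if v: "\<forall>(T :: 'a topology) f. inv_DTS T f \<and> T_D_space T \<longrightarrow> dvalid T f \<phi>"
  proof (intro allI impI)
    fix W :: "'a set" and R f assume fr: "finite W \<and> inv_dyn_K4_frame W R f"
    show "kvalid W R f \<phi>"
    proof (rule ccontr)
      assume "\<not> kvalid W R f \<phi>"
      then obtain T :: "'a topology" and F where "inv_DTS T F" "T_D_space T" "\<not> dvalid T F \<phi>"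
        using topo_construct[of W R f \<phi>] fr assms by blast
      then show False using v by blast
    qed
  qed
  show ?thesis using A B C D by blast
qed


end
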